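(* Let $G$ be a graph, $k\ge1$, and suppose $M_k(G)$ is a connected matroid. Then a set $B\subseteq E(G)$ is a base of $M_k(G)$ if and only if $\Delta G\langle B\rangle=k-1$, $V(G\langle B\rangle)=V(G)$, and $G\langle B\rangle$ has no tree component (i.e. $\Delta A\ge0$ for every component $A$ of $G\langle B\rangle$).
   Context: Graphs are finite, may have loops and parallel edges, and have no isolated vertices. $\Delta H=|E(H)|-|V(H)|$. For $X\subseteq E(G)$, $G\langle X\rangle$ is the subgraph with edge set $X$ and vertex set the vertices incident to $X$. For $k\ge0$, $M_k(G)$ is the matroid on $E(G)$ whose circuits are the inclusion-minimal members of $\{C\subseteq E(G):C\neq\emptyset,\ |C|=|V(G\langle C\rangle)|+k\}$. A matroid is connected if its ground set has at least two elements and every two elements lie in a common circuit. *)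

theory Defs
  imports Main
begin

text \<open>A graph (loops and parallel edges allowed, no isolated vertices) is given by a
finite edge set E and an incidence map ends: each edge has one end (loop) or two ends.
The vertex set is the set of vertices incident to edges.\<close>

definition graph :: "'e set \<Rightarrow> ('e \<Rightarrow> 'v set) \<Rightarrow> bool" where
  "graph E ends \<longleftrightarrow> finite E \<and> (\<forall>e\<in>E. 1 \<le> card (ends e) \<and> card (ends e) \<le> 2)"

definition verts :: "('e \<Rightarrow> 'v set) \<Rightarrow> 'e set \<Rightarrow> 'v set" where
  "verts ends X = (\<Union>e\<in>X. ends e)"

definition delta :: "('e \<Rightarrow> 'v set) \<Rightarrow> 'e set \<Rightarrow> int" where
  "delta ends X = int (card X) - int (card (verts ends X))"

definition circ_cand :: "('e \<Rightarrow> 'v set) \<Rightarrow> 'e set \<Rightarrow> nat \<Rightarrow> 'e set \<Rightarrow> bool" where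
  "circ_cand ends E k C \<longleftrightarrow> C \<subseteq> E \<and> C \<noteq> {} \<and> card C = card (verts ends C) + k"

definition Mk_circuit :: "('e \<Rightarrow> 'v set) \<Rightarrow> 'e set \<Rightarrow> nat \<Rightarrow> 'e set \<Rightarrow> bool" where
  "Mk_circuit ends E k C \<longleftrightarrow> circ_cand ends E k C \<and>
     (\<forall>D. D \<subseteq> C \<and> circ_cand ends E k D \<longrightarrow> D = C)"

definition Mk_indep :: "('e \<Rightarrow> 'v set) \<Rightarrow> 'e set \<Rightarrow> nat \<Rightarrow> 'e set \<Rightarrow> bool" where
  "Mk_indep ends E k I \<longleftrightarrow> I \<subseteq> E \<and> \<not> (\<exists>C. Mk_circuit ends E k C \<and> C \<subseteq> I)"

definition Mk_base :: "('e \<Rightarrow> 'v set) \<Rightarrow> 'e set \<Rightarrow> nat \<Rightarrow> 'e set \<Rightarrow> bool" where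
  "Mk_base ends E k B \<longleftrightarrow> Mk_indep ends E k B \<and>
     (\<forall>I. Mk_indep ends E k I \<and> B \<subseteq> I \<longrightarrow> I = B)"

definition Mk_connected :: "('e \<Rightarrow> 'v set) \<Rightarrow> 'e set \<Rightarrow> nat \<Rightarrow> bool" where
  "Mk_connected ends E k \<longleftrightarrow> 2 \<le> card E \<and>
     (\<forall>e\<in>E. \<forall>f\<in>E. \<exists>C. Mk_circuit ends E k C \<and> e \<in> C \<and> f \<in> C)"

text \<open>Components of G<X>: since G<X> has no isolated vertices, each component is G<Y>
for Y an equivalence class of edges of X under "connected by a chain of edges of X,
consecutive ones sharing an end".\<close>
definition edge_adj :: "('e \<Rightarrow> 'v set) \<Rightarrow> 'e set \<Rightarrow> 'e \<Rightarrow> 'e \<Rightarrow> bool" where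
  "edge_adj ends X e f \<longleftrightarrow> e \<in> X \<and> f \<in> X \<and> ends e \<inter> ends f \<noteq> {}"

definition comp_edge_sets :: "('e \<Rightarrow> 'v set) \<Rightarrow> 'e set \<Rightarrow> 'e set set" where
  "comp_edge_sets ends X = {{f. (edge_adj ends X)\<^sup>*\<^sup>* e f} | e. e \<in> X}"

end

theory Submission
  imports Defs
begin

lemma ends_props:
  assumes "graph E ends" "e \<in> E"
  shows "finite (ends e)" "ends e \<noteq> {}" "card (ends e) \<le> 2"
proof -
  have "1 \<le> card (ends e)" "card (ends e) \<le> 2" using assms unfolding graph_def by auto
  then show "finite (ends e)" "ends e \<noteq> {}" "card (ends e) \<le> 2"
    by (auto intro: card_ge_0_finite)
qed

lemma finE: "graph E ends \<Longrightarrow> X \<subseteq> E \<Longrightarrow> finite X"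
  unfolding graph_def using finite_subset by blast

lemma verts_Un: "verts ends (X \<union> Y) = verts ends X \<union> verts ends Y"
  by (auto simp: verts_def)

lemma verts_insert: "verts ends (insert e X) = ends e \<union> verts ends X"
  by (auto simp: verts_def)

lemma verts_mono: "X \<subseteq> Y \<Longrightarrow> verts ends X \<subseteq> verts ends Y"
  by (auto simp: verts_def)

lemma verts_empty[simp]: "verts ends {} = {}"
  by (auto simp: verts_def)

lemma delta_empty[simp]: "delta ends {} = 0"
  by (simp add: delta_def)

lemma finite_verts: "graph E ends \<Longrightarrow> X \<subseteq> E \<Longrightarrow> finite (verts ends X)"
  unfolding verts_def using finE ends_props(1) by (metis finite_UN_I subsetD)

lemma delta_supermod:
  assumes g: "graph E ends" and XE: "X \<subseteq> E" and YE: "Y \<subseteq> E"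
  shows "delta ends X + delta ends Y \<le> delta ends (X \<union> Y) + delta ends (X \<inter> Y)"
proof -
  have fX: "finite X" "finite Y" using finE[OF g] XE YE by auto
  have fV: "finite (verts ends X)" "finite (verts ends Y)" using finite_verts[OF g] XE YE by auto
  have 1: "card (X \<union> Y) + card (X \<inter> Y) = card X + card Y" using card_Un_Int fX by metis
  have 2: "card (verts ends X \<union> verts ends Y) + card (verts ends X \<inter> verts ends Y)
     = card (verts ends X) + card (verts ends Y)" using card_Un_Int fV by metis
  have 3: "card (verts ends (X \<inter> Y)) \<le> card (verts ends X \<inter> verts ends Y)"
    by (rule card_mono) (use fV in \<open>auto simp: verts_def\<close>)
  show ?thesis unfolding delta_def verts_Un using 1 2 3 by linarith
qed

lemma delta_insert:
  assumes g: "graph E ends" and XE: "X \<subseteq> E" and e: "e \<in> E" "e \<notin> X"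
  shows "delta ends (insert e X) = delta ends X + 1 - int (card (ends e - verts ends X))"
proof -
  have fX: "finite X" using finE[OF g] XE by auto
  have fV: "finite (verts ends X)" using finite_verts[OF g] XE by auto
  have fe: "finite (ends e)" using ends_props(1)[OF g e(1)] .
  have eq: "verts ends (insert e X) = verts ends X \<union> (ends e - verts ends X)"
    by (auto simp: verts_def)
  have c: "card (verts ends X \<union> (ends e - verts ends X)) = card (verts ends X) + card (ends e - verts ends X)"
    by (rule card_Un_disjoint) (use fV fe in auto)
  have "card (verts ends (insert e X)) = card (verts ends X) + card (ends e - verts ends X)"
    by (simp only: eq c)
  moreover have "card (insert e X) = card X + 1" using fX e by simp
  ultimately show ?thesis unfolding delta_def by linarith
qed

lemma delta_disj:
  assumes g: "graph E ends" and XE: "X \<subseteq> E" and YE: "Y \<subseteq> E"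
    and d1: "X \<inter> Y = {}" and d2: "verts ends X \<inter> verts ends Y = {}"
  shows "delta ends (X \<union> Y) = delta ends X + delta ends Y"
proof -
  have fX: "finite X" "finite Y" using finE[OF g] XE YE by auto
  have fV: "finite (verts ends X)" "finite (verts ends Y)" using finite_verts[OF g] XE YE by auto
  have "card (X \<union> Y) = card X + card Y" using card_Un_disjoint fX d1 by metis
  moreover have "card (verts ends (X \<union> Y)) = card (verts ends X) + card (verts ends Y)"
    unfolding verts_Un using card_Un_disjoint fV d2 by metis
  ultimately show ?thesis unfolding delta_def by linarith
qed

lemma single_delta:
  assumes g: "graph E ends" and e: "e \<in> E"
  shows "delta ends {e} \<le> 0"
proof -
  have "verts ends {e} = ends e" by (simp add: verts_def)
  moreover have "card (ends e) \<ge> 1" using ends_props[OF g e] by (simp add: Suc_leI card_gt_0_iff)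
  ultimately show ?thesis unfolding delta_def by simp
qed

lemma step_down:
  assumes g: "graph E ends" and XE: "X \<subseteq> E" and e: "e \<in> X"
  shows "delta ends (X - {e}) \<ge> delta ends X - 1"
proof -
  have fX: "finite X" using finE[OF g] XE by auto
  have "card (verts ends (X - {e})) \<le> card (verts ends X)"
    by (rule card_mono) (use finite_verts[OF g XE] in \<open>auto simp: verts_def\<close>)
  moreover have "card (X - {e}) = card X - 1" using e fX by simp
  moreover have "card X \<ge> 1" using e fX by (metis One_nat_def Suc_leI card_gt_0_iff empty_iff)
  ultimately show ?thesis unfolding delta_def by linarith
qed

lemma stepping:
  assumes g: "graph E ends" and k: "1 \<le> k"
  shows "X \<subseteq> E \<Longrightarrow> X \<noteq> {} \<Longrightarrow> delta ends X \<ge> int k \<Longrightarrow> \<exists>C\<subseteq>X. C \<noteq> {} \<and> delta ends C = int k"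
proof (induction "card X" arbitrary: X rule: less_induct)
  case less
  show ?case
  proof (cases "delta ends X = int k")
    case True then show ?thesis using less.prems by blast
  next
    case False
    hence gt: "delta ends X > int k" using less.prems by simp
    obtain e where e: "e \<in> X" using less.prems by blast
    have ne: "X - {e} \<noteq> {}"
    proof
      assume "X - {e} = {}"
      hence "X = {e}" using e by blast
      thus False using gt single_delta[OF g, of e] e less.prems k by auto
    qed
    have "delta ends (X - {e}) \<ge> int k" using step_down[OF g less.prems(1) e] gt by linarith
    moreover have "card (X - {e}) < card X" using e finE[OF g less.prems(1)]
      by (meson card_Diff1_less)
    ultimately obtain C where "C \<subseteq> X - {e}" "C \<noteq> {}" "delta ends C = int k"
      using less.hyps[of "X - {e}"] less.prems ne by blast
    then show ?thesis by blast
  qed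
qed

lemma cand_iff: "circ_cand ends E k C \<longleftrightarrow> C \<subseteq> E \<and> C \<noteq> {} \<and> delta ends C = int k"
  unfolding circ_cand_def delta_def by auto

lemma exists_circuit:
  assumes g: "graph E ends"
  shows "circ_cand ends E k C \<Longrightarrow> \<exists>D\<subseteq>C. Mk_circuit ends E k D"
proof (induction "card C" arbitrary: C rule: less_induct)
  case less
  show ?case
  proof (cases "Mk_circuit ends E k C")
    case True then show ?thesis by blast
  next
    case False
    then obtain D where D: "D \<subseteq> C" "circ_cand ends E k D" "D \<noteq> C"
      using less.prems unfolding Mk_circuit_def by blast
    have "finite C" using less.prems finE[OF g] unfolding circ_cand_def by blast
    hence "card D < card C" using D by (meson psubsetI psubset_card_mono)
    then show ?thesis using less.hyps D by (meson order_trans)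
  qed
qed

lemma indep_iff:
  assumes g: "graph E ends" and k: "1 \<le> k"
  shows "Mk_indep ends E k I \<longleftrightarrow> I \<subseteq> E \<and> (\<forall>C. C \<subseteq> I \<and> C \<noteq> {} \<longrightarrow> delta ends C \<le> int k - 1)"
proof (rule iffI)
  assume a: "Mk_indep ends E k I"
  have IE: "I \<subseteq> E" using a unfolding Mk_indep_def by (rule conjunct1)
  have noc: "\<And>C. Mk_circuit ends E k C \<Longrightarrow> \<not> C \<subseteq> I" using a unfolding Mk_indep_def by blast
  have "\<forall>C. C \<subseteq> I \<and> C \<noteq> {} \<longrightarrow> delta ends C \<le> int k - 1"
  proof (intro allI impI)
    fix C assume C: "C \<subseteq> I \<and> C \<noteq> {}"
    show "delta ends C \<le> int k - 1"
    proof (rule ccontr)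
      assume d: "\<not> delta ends C \<le> int k - 1"
      have CE: "C \<subseteq> E" using C IE by (meson order_trans)
      have Cne: "C \<noteq> {}" using C by (rule conjunct2)
      have "delta ends C \<ge> int k" using d by linarith
      then obtain C' where C': "C' \<subseteq> C" "C' \<noteq> {}" "delta ends C' = int k"
        using stepping[OF g k CE Cne] by blast
      have "C' \<subseteq> E" using C'(1) CE by (rule order_trans)
      hence "circ_cand ends E k C'" unfolding cand_iff using C' by simp
      then obtain D where D: "D \<subseteq> C'" "Mk_circuit ends E k D" using exists_circuit[OF g] by blast
      have "D \<subseteq> I" using D(1) C'(1) C by (meson order_trans)
      thus False using noc D(2) by blast
    qed
  qed
  thus "I \<subseteq> E \<and> (\<forall>C. C \<subseteq> I \<and> C \<noteq> {} \<longrightarrow> delta ends C \<le> int k - 1)" using IE by (rule conjI[rotated])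
next
  assume a: "I \<subseteq> E \<and> (\<forall>C. C \<subseteq> I \<and> C \<noteq> {} \<longrightarrow> delta ends C \<le> int k - 1)"
  have "\<not> (\<exists>C. Mk_circuit ends E k C \<and> C \<subseteq> I)"
  proof
    assume "\<exists>C. Mk_circuit ends E k C \<and> C \<subseteq> I"
    then obtain C where C: "Mk_circuit ends E k C" "C \<subseteq> I" by blast
    hence "C \<noteq> {}" "delta ends C = int k" unfolding Mk_circuit_def cand_iff by blast+
    moreover have "delta ends C \<le> int k - 1" using a C(2) calculation(1) by blast
    ultimately show False by linarith
  qed
  thus "Mk_indep ends E k I" unfolding Mk_indep_def using a by blast
qed

lemma indepD:
  assumes g: "graph E ends" and k: "1 \<le> k" and I: "Mk_indep ends E k I"
  shows "I \<subseteq> E" "\<And>C. C \<subseteq> I \<Longrightarrow> C \<noteq> {} \<Longrightarrow> delta ends C \<le> int k - 1"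
proof -
  have "I \<subseteq> E \<and> (\<forall>C. C \<subseteq> I \<and> C \<noteq> {} \<longrightarrow> delta ends C \<le> int k - 1)"
    by (rule iffD1[OF indep_iff[OF g k] I])
  thus "I \<subseteq> E" "\<And>C. C \<subseteq> I \<Longrightarrow> C \<noteq> {} \<Longrightarrow> delta ends C \<le> int k - 1" by blast+
qed

lemma indepI:
  assumes g: "graph E ends" and k: "1 \<le> k" and "I \<subseteq> E" "\<And>C. C \<subseteq> I \<Longrightarrow> C \<noteq> {} \<Longrightarrow> delta ends C \<le> int k - 1"
  shows "Mk_indep ends E k I"
  by (rule iffD2[OF indep_iff[OF g k]]) (use assms(3,4) in blast)

lemma circuit_proper:
  assumes g: "graph E ends" and k: "1 \<le> k" and C: "Mk_circuit ends E k C"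
    and S: "S \<subseteq> C" "S \<noteq> C"
  shows "delta ends S \<le> int k - 1"
proof (rule ccontr)
  assume d: "\<not> delta ends S \<le> int k - 1"
  have CE: "C \<subseteq> E" using C unfolding Mk_circuit_def circ_cand_def by blast
  have "S \<noteq> {}" using d k by auto
  have SE: "S \<subseteq> E" using S CE by blast
  have "delta ends S \<ge> int k" using d by linarith
  then obtain D where D: "D \<subseteq> S" "D \<noteq> {}" "delta ends D = int k"
    using stepping[OF g k SE \<open>S \<noteq> {}\<close>] by blast
  hence "circ_cand ends E k D" unfolding cand_iff using S CE by blast
  hence "D = C" using C D S unfolding Mk_circuit_def by blast
  thus False using D S by blast
qed


lemma tight_lemma:
  assumes g: "graph E ends" and k: "1 \<le> k" and B: "Mk_base ends E k B" and e: "e \<in> E" "e \<notin> B"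
  shows "\<exists>X\<subseteq>B. X \<noteq> {} \<and> delta ends X = int k - 1 \<and> ends e \<subseteq> verts ends X"
proof -
  have indB: "Mk_indep ends E k B" using B unfolding Mk_base_def by blast
  note BE = indepD(1)[OF g k indB] and I1 = indepD(2)[OF g k indB]
  have "\<not> Mk_indep ends E k (insert e B)" using B e unfolding Mk_base_def by blast
  moreover have ieE: "insert e B \<subseteq> E" using BE e by blast
  ultimately have "\<not> (\<forall>C. C \<subseteq> insert e B \<and> C \<noteq> {} \<longrightarrow> delta ends C \<le> int k - 1)"
    using indepI[OF g k ieE] by meson
  then obtain C where C: "C \<subseteq> insert e B" "C \<noteq> {}" "\<not> delta ends C \<le> int k - 1"
    by blast
  have eC: "e \<in> C"
  proof (rule ccontr)
    assume "e \<notin> C"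
    hence "C \<subseteq> B" using C(1) by blast
    thus False using I1[of C] C(2,3) by blast
  qed
  define X0 where "X0 = C - {e}"
  have X0B: "X0 \<subseteq> B" using C X0_def by blast
  have CX: "C = insert e X0" using eC X0_def by blast
  have X0E: "X0 \<subseteq> E" using X0B BE by blast
  have dC: "delta ends C = delta ends X0 + 1 - int (card (ends e - verts ends X0))"
  proof -
    have "e \<notin> X0" unfolding X0_def by blast
    from delta_insert[OF g X0E e(1) this] show ?thesis by (simp only: CX[symmetric])
  qed
  have ne: "X0 \<noteq> {}"
  proof
    assume "X0 = {}"
    hence "C = {e}" using CX by simp
    thus False using single_delta[OF g e(1)] C k by simp
  qed
  hence "delta ends X0 \<le> int k - 1" using I1 X0B by blast
  hence c0: "card (ends e - verts ends X0) = 0" and dX: "delta ends X0 = int k - 1"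
    using dC C by linarith+
  have "ends e - verts ends X0 = {}" using c0 ends_props(1)[OF g e(1)] by simp
  thus ?thesis using X0B ne dX by blast
qed

theorem mainTheorem16:
  fixes E :: "'e set" and ends :: "'e \<Rightarrow> 'v set" and k :: nat and B :: "'e set"
  assumes "graph E ends"
    and "1 \<le> k"
    and "Mk_connected ends E k"
    and "B \<subseteq> E"
  shows "Mk_base ends E k B \<longleftrightarrow>
           delta ends B = int k - 1 \<and>
           verts ends B = verts ends E \<and>
           (\<forall>Y\<in>comp_edge_sets ends B. delta ends Y \<ge> 0)"
proof
  note g = assms(1) and k = assms(2) and conn = assms(3) and BE = assms(4)
  assume B: "Mk_base ends E k B"
  have indB: "Mk_indep ends E k B" using B unfolding Mk_base_def by blast
  note I1 = indepD(2)[OF g k indB]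
  have circ_ex: "\<And>f. f \<in> E \<Longrightarrow> \<exists>C. Mk_circuit ends E k C \<and> f \<in> C"
    using conn unfolding Mk_connected_def by blast
  have circE: "\<And>C. Mk_circuit ends E k C \<Longrightarrow> C \<subseteq> E \<and> C \<noteq> {} \<and> delta ends C = int k"
    unfolding Mk_circuit_def cand_iff by blast
  have "E \<noteq> {}" using conn unfolding Mk_connected_def by auto
  then obtain e0 where "e0 \<in> E" by blast
  then obtain C0 where C0: "Mk_circuit ends E k C0" using circ_ex by blast
  have "\<not> C0 \<subseteq> B"
  proof
    assume "C0 \<subseteq> B"
    hence "delta ends C0 \<le> int k - 1" using I1 circE[OF C0] by blast
    thus False using circE[OF C0] by linarith
  qed
  then obtain e1 where e1: "e1 \<in> E" "e1 \<notin> B" using circE[OF C0] by blast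
  have VB: "verts ends B = verts ends E"
  proof
    show "verts ends B \<subseteq> verts ends E" using BE by (rule verts_mono)
    show "verts ends E \<subseteq> verts ends B"
    proof
      fix v assume "v \<in> verts ends E"
      then obtain e where e: "e \<in> E" "v \<in> ends e" unfolding verts_def by blast
      show "v \<in> verts ends B"
      proof (cases "e \<in> B")
        case True thus ?thesis using e unfolding verts_def by blast
      next
        case False
        then obtain X where "X \<subseteq> B" "ends e \<subseteq> verts ends X"
          using tight_lemma[OF g k B e(1)] by blast
        thus ?thesis using e verts_mono[of X B ends] by blast
      qed
    qed
  qed
  define T where "T = {X. X \<subseteq> B \<and> X \<noteq> {} \<and> delta ends X = int k - 1}"
  have finB: "finite B" using finE[OF g BE] .
  have finT: "finite T" unfolding T_def using finB by (metis (no_types, lifting) Pow_iff finite_Pow_iff finite_subset mem_Collect_eq subsetI)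
  have neT: "T \<noteq> {}" using tight_lemma[OF g k B e1] unfolding T_def by blast
  define m where "m = Max (card ` T)"
  have "m \<in> card ` T" unfolding m_def using finT neT by simp
  then obtain U where U: "U \<in> T" "card U = m" by blast
  have Umax: "\<And>X. X \<in> T \<Longrightarrow> card X \<le> card U" unfolding U(2) m_def using finT by simp
  have UB: "U \<subseteq> B" and Une: "U \<noteq> {}" and dU: "delta ends U = int k - 1" using U(1) unfolding T_def by auto
  have sub: "\<And>X. X \<in> T \<Longrightarrow> X \<subseteq> U"
  proof -
    fix X assume X: "X \<in> T"
    have XB: "X \<subseteq> B" and dX: "delta ends X = int k - 1" using X unfolding T_def by auto
    have sm: "delta ends X + delta ends U \<le> delta ends (X \<union> U) + delta ends (X \<inter> U)"
      using delta_supermod[OF g, of X U] XB UB BE by blast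
    have "delta ends (X \<inter> U) \<le> int k - 1"
      using I1[of "X \<inter> U"] XB k by (cases "X \<inter> U = {}") auto
    moreover have "delta ends (X \<union> U) \<le> int k - 1" using I1[of "X \<union> U"] XB UB Une by blast
    ultimately have "delta ends (X \<union> U) = int k - 1" using sm dX dU by linarith
    hence "X \<union> U \<in> T" using XB UB Une unfolding T_def by blast
    hence "card (X \<union> U) \<le> card U" by (rule Umax)
    moreover have "finite (X \<union> U)" using XB UB finB finite_subset by blast
    moreover have "U \<subseteq> X \<union> U" by blast
    ultimately have "X \<union> U = U" using card_seteq by blast
    thus "X \<subseteq> U" by blast
  qed
  have endsU: "\<And>e. e \<in> E \<Longrightarrow> e \<notin> B \<Longrightarrow> ends e \<subseteq> verts ends U"
  proof -
    fix e assume "e \<in> E" "e \<notin> B"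
    then obtain X where "X \<subseteq> B" "X \<noteq> {}" "delta ends X = int k - 1" "ends e \<subseteq> verts ends X"
      using tight_lemma[OF g k B] by blast
    hence "X \<subseteq> U" "ends e \<subseteq> verts ends X" using sub unfolding T_def by auto
    thus "ends e \<subseteq> verts ends U" using verts_mono[of X U ends] by blast
  qed
  have BU: "B \<subseteq> U"
  proof
    fix f assume fB: "f \<in> B"
    show "f \<in> U"
    proof (rule ccontr)
      assume fU: "f \<notin> U"
      obtain C where C: "Mk_circuit ends E k C" "f \<in> C" using circ_ex fB BE by blast
      have CE: "C \<subseteq> E" and dC: "delta ends C = int k" using circE[OF C(1)] by auto
      define R where "R = C \<inter> (B - U)"
      define S where "S = C - R"
      have fR: "f \<in> R" using fB fU C R_def by blast
      have dS: "delta ends S \<le> int k - 1"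
      proof (rule circuit_proper[OF g k C(1)])
        show "S \<subseteq> C" unfolding S_def by blast
        show "S \<noteq> C" using fR C(2) unfolding S_def by blast
      qed
      have VSU: "verts ends S \<subseteq> verts ends U"
      proof
        fix v assume "v \<in> verts ends S"
        then obtain s where s: "s \<in> S" "v \<in> ends s" unfolding verts_def by blast
        show "v \<in> verts ends U"
        proof (cases "s \<in> B")
          case True
          hence "s \<in> U" using s S_def R_def by blast
          thus ?thesis using s unfolding verts_def by blast
        next
          case False
          thus ?thesis using endsU[of s] s S_def CE by blast
        qed
      qed
      have RB: "R \<subseteq> B" and RE: "R \<subseteq> E" and SE: "S \<subseteq> E" and UE: "U \<subseteq> E"
        using R_def S_def CE UB BE by auto
      have finR: "finite R" "finite S" "finite U" using finE[OF g] RE SE UE by auto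
      have fV: "finite (verts ends R)" "finite (verts ends S)" "finite (verts ends U)"
        using finite_verts[OF g] RE SE UE by auto
      have c1: "card (U \<union> R) = card U + card R"
        by (rule card_Un_disjoint) (use finR R_def in auto)
      have c2: "card C = card S + card R"
      proof -
        have "C = S \<union> R" "S \<inter> R = {}" using S_def R_def by auto
        thus ?thesis using card_Un_disjoint finR by metis
      qed
      have c3: "card (verts ends (U \<union> R)) = card (verts ends U) + card (verts ends R - verts ends U)"
      proof -
        have "verts ends (U \<union> R) = verts ends U \<union> (verts ends R - verts ends U)"
          by (auto simp: verts_Un)
        moreover have "card (verts ends U \<union> (verts ends R - verts ends U)) = card (verts ends U) + card (verts ends R - verts ends U)"
          by (rule card_Un_disjoint) (use fV in auto)
        ultimately show ?thesis by simp
      qed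
      have c4: "card (verts ends C) = card (verts ends S) + card (verts ends R - verts ends S)"
      proof -
        have "C = S \<union> R" using S_def R_def by auto
        hence "verts ends C = verts ends S \<union> (verts ends R - verts ends S)"
          by (auto simp: verts_Un)
        moreover have "card (verts ends S \<union> (verts ends R - verts ends S)) = card (verts ends S) + card (verts ends R - verts ends S)"
          by (rule card_Un_disjoint) (use fV in auto)
        ultimately show ?thesis by simp
      qed
      have c5: "card (verts ends R - verts ends U) \<le> card (verts ends R - verts ends S)"
        by (rule card_mono) (use fV VSU in auto)
      have "delta ends (U \<union> R) \<ge> delta ends U + delta ends C - delta ends S"
        unfolding delta_def using c1 c2 c3 c4 c5 by linarith
      hence "delta ends (U \<union> R) \<ge> int k" using dU dC dS by linarith
      moreover have "delta ends (U \<union> R) \<le> int k - 1" using I1[of "U \<union> R"] UB RB Une by blast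
      ultimately show False by linarith
    qed
  qed
  have dB: "delta ends B = int k - 1" using BU UB dU by auto
  have comps: "\<forall>Y\<in>comp_edge_sets ends B. delta ends Y \<ge> 0"
  proof
    fix Y assume "Y \<in> comp_edge_sets ends B"
    then obtain e0 where e0: "e0 \<in> B" and Y: "Y = {f. (edge_adj ends B)\<^sup>*\<^sup>* e0 f}"
      unfolding comp_edge_sets_def by blast
    have YB: "Y \<subseteq> B"
    proof
      fix f assume "f \<in> Y"
      hence "(edge_adj ends B)\<^sup>*\<^sup>* e0 f" using Y by blast
      thus "f \<in> B" by (induction rule: rtranclp_induct) (use e0 in \<open>auto simp: edge_adj_def\<close>)
    qed
    have disj: "verts ends Y \<inter> verts ends (B - Y) = {}"
    proof (rule ccontr)
      assume "verts ends Y \<inter> verts ends (B - Y) \<noteq> {}"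
      then obtain y h v where y: "y \<in> Y" "v \<in> ends y" and h: "h \<in> B - Y" "v \<in> ends h"
        unfolding verts_def by blast
      have "edge_adj ends B y h" using y h YB unfolding edge_adj_def by blast
      moreover have "(edge_adj ends B)\<^sup>*\<^sup>* e0 y" using y Y by blast
      ultimately have "(edge_adj ends B)\<^sup>*\<^sup>* e0 h" by (rule rtranclp.rtrancl_into_rtrancl[rotated])
      thus False using h Y by blast
    qed
    have YE: "Y \<subseteq> E" "B - Y \<subseteq> E" using YB BE by auto
    have "delta ends (Y \<union> (B - Y)) = delta ends Y + delta ends (B - Y)"
      by (rule delta_disj[OF g YE]) (use disj in auto)
    moreover have "Y \<union> (B - Y) = B" using YB by blast
    ultimately have sum: "delta ends B = delta ends Y + delta ends (B - Y)" by simp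
    show "delta ends Y \<ge> 0"
    proof (rule ccontr)
      assume neg: "\<not> delta ends Y \<ge> 0"
      show False
      proof (cases "B - Y = {}")
        case True
        hence "delta ends (B - Y) = 0" by (simp only: delta_empty)
        thus False using sum dB neg k by linarith
      next
        case False
        hence "delta ends (B - Y) \<le> int k - 1" using I1[of "B - Y"] by blast
        thus False using sum dB neg by linarith
      qed
    qed
  qed
  show "delta ends B = int k - 1 \<and> verts ends B = verts ends E \<and>
           (\<forall>Y\<in>comp_edge_sets ends B. delta ends Y \<ge> 0)" using dB VB comps by blast
next
  note g = assms(1) and k = assms(2) and conn = assms(3) and BE = assms(4)
  assume a: "delta ends B = int k - 1 \<and> verts ends B = verts ends E \<and>
           (\<forall>Y\<in>comp_edge_sets ends B. delta ends Y \<ge> 0)"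
  have dB: "delta ends B = int k - 1" and VB: "verts ends B = verts ends E"
    and comps: "\<And>Y. Y\<in>comp_edge_sets ends B \<Longrightarrow> delta ends Y \<ge> 0" using a by auto
  have finB: "finite B" using finE[OF g BE] .
  have grow: "\<And>X. X \<subseteq> B \<Longrightarrow> delta ends X \<le> delta ends B"
  proof -
    fix X show "X \<subseteq> B \<Longrightarrow> delta ends X \<le> delta ends B"
    proof (induction "card (B - X)" arbitrary: X rule: less_induct)
      case less
      have XE: "X \<subseteq> E" using less.prems BE by blast
      show ?case
      proof (cases "X = B")
        case True thus ?thesis by simp
      next
        case False
        show ?thesis
        proof (cases "\<exists>e\<in>B - X. \<exists>x\<in>X. ends e \<inter> ends x \<noteq> {}")
          case True
          then obtain e x v where e: "e \<in> B" "e \<notin> X" and x: "x \<in> X" and v: "v \<in> ends e" "v \<in> ends x"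
            by blast
          have eE: "e \<in> E" using e BE by blast
          have "delta ends (insert e X) = delta ends X + 1 - int (card (ends e - verts ends X))"
            using delta_insert[OF g XE eE e(2)] .
          moreover have "card (ends e - verts ends X) \<le> 1"
          proof -
            have "v \<in> verts ends X" using x v unfolding verts_def by blast
            hence "ends e - verts ends X \<subseteq> ends e - {v}" by blast
            hence "card (ends e - verts ends X) \<le> card (ends e - {v})"
              using ends_props(1)[OF g eE] by (simp add: card_mono)
            also have "\<dots> = card (ends e) - 1" using v ends_props(1)[OF g eE] by simp
            finally show ?thesis using ends_props(3)[OF g eE] by linarith
          qed
          ultimately have "delta ends X \<le> delta ends (insert e X)" by linarith
          moreover have "delta ends (insert e X) \<le> delta ends B"
          proof (rule less.hyps)
            show "insert e X \<subseteq> B" using e less.prems by blast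
            show "card (B - insert e X) < card (B - X)"
            proof -
              have "B - insert e X = (B - X) - {e}" by blast
              moreover have "e \<in> B - X" using e by blast
              moreover have "finite (B - X)" using finB by blast
              ultimately show ?thesis by (metis card_Diff1_less)
            qed
          qed
          ultimately show ?thesis by linarith
        next
          case noadj: False
          obtain e0 where e0: "e0 \<in> B" "e0 \<notin> X" using False less.prems by blast
          define Y where "Y = {f. (edge_adj ends B)\<^sup>*\<^sup>* e0 f}"
          have YC: "Y \<in> comp_edge_sets ends B" unfolding comp_edge_sets_def Y_def using e0 by blast
          have YBX: "Y \<subseteq> B - X"
          proof
            fix f assume "f \<in> Y"
            hence "(edge_adj ends B)\<^sup>*\<^sup>* e0 f" using Y_def by blast
            thus "f \<in> B - X"
            proof (induction rule: rtranclp_induct)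
              case base thus ?case using e0 by blast
            next
              case (step y z)
              hence "z \<in> B" "y \<in> B - X" "ends y \<inter> ends z \<noteq> {}" unfolding edge_adj_def by auto
              thus ?case using noadj by blast
            qed
          qed
          have disj: "verts ends X \<inter> verts ends Y = {}"
            using noadj YBX unfolding verts_def by blast
          have YE: "Y \<subseteq> E" using YBX BE by blast
          have "delta ends (X \<union> Y) = delta ends X + delta ends Y"
            by (rule delta_disj[OF g XE YE]) (use YBX disj in auto)
          moreover have "delta ends Y \<ge> 0" using comps YC by blast
          moreover have "delta ends (X \<union> Y) \<le> delta ends B"
          proof (rule less.hyps)
            show "X \<union> Y \<subseteq> B" using YBX less.prems by blast
            have "e0 \<in> Y" unfolding Y_def by simp
            hence "B - (X \<union> Y) \<subset> B - X" using e0 by blast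
            thus "card (B - (X \<union> Y)) < card (B - X)" using finB by (simp add: psubset_card_mono)
          qed
          ultimately show ?thesis by linarith
        qed
      qed
    qed
  qed
  have indB: "Mk_indep ends E k B"
    by (rule indepI[OF g k BE]) (use grow dB in auto)
  show "Mk_base ends E k B" unfolding Mk_base_def
  proof (intro conjI allI impI indB)
    fix I assume I: "Mk_indep ends E k I \<and> B \<subseteq> I"
    have Ii: "Mk_indep ends E k I" using I by blast
    note IE = indepD(1)[OF g k Ii] and I1 = indepD(2)[OF g k Ii]
    show "I = B"
    proof (rule ccontr)
      assume "I \<noteq> B"
      then obtain e where e: "e \<in> I" "e \<notin> B" using I by blast
      have eE: "e \<in> E" using e IE by blast
      have "ends e \<subseteq> verts ends B" using VB eE unfolding verts_def by blast
      hence "ends e - verts ends B = {}" by blast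
      hence "card (ends e - verts ends B) = 0" by (metis card.empty)
      hence "delta ends (insert e B) = int k"
        using delta_insert[OF g BE eE e(2)] dB by linarith
      moreover have "insert e B \<subseteq> I" using I e by blast
      ultimately show False using I1[of "insert e B"] by auto
    qed
  qed
qed

end
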